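(* There exists an instance of 2-SCSS-$(2,2)$ in which no optimum solution is general-reverse-compatible.
   Context: The 2-SCSS-$(k_1,k_2)$ problem: given a directed graph $G=(V,E)$ with edge weights $\omega:E\to\mathbb{R}^{\geq 0}$, terminals $s,t$ and integers $k_1,k_2$, find $k_1$ paths $F_1,\dots,F_{k_1}$ from $s$ to $t$ and $k_2$ paths $B_1,\dots,B_{k_2}$ from $t$ to $s$ minimizing $\sum_{e\in E}\omega(e)\phi(e)$ with $\phi(e)=\max\{|\{i: e\in F_i\}|,\ |\{j: e\in B_j\}|\}$. For an $s\leadsto t$ path $F$ and a $t\leadsto s$ path $B$, let $P_1,\dots,P_d$ be the maximal sub-paths shared by $F$ and $B$, with $P_j$ the $j$-th encountered while traversing $F$; $(F,B)$ is path-reverse-compatible if for every $j\in[d]$, $P_j$ is the $(d-j+1)$-th of them encountered while traversing $B$. A solution $(\{F_1,\dots,F_{k_1}\},\{B_1,\dots,B_{k_2}\})$ is general-reverse-compatible if $(F_i,B_j)$ is path-reverse-compatible for all $i\in[k_1]$, $j\in[k_2]$. *)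

theory Defs
  imports Complex_Main "HOL-Library.Sublist"
begin

definition is_path :: "('v \<times> 'v) set \<Rightarrow> 'v \<Rightarrow> 'v \<Rightarrow> 'v list \<Rightarrow> bool" where
  "is_path E u v p \<longleftrightarrow> p \<noteq> [] \<and> hd p = u \<and> last p = v \<and> distinct p \<and>
     (\<forall>i. Suc i < length p \<longrightarrow> (p ! i, p ! Suc i) \<in> E)"

definition path_edges :: "'v list \<Rightarrow> ('v \<times> 'v) set" where
  "path_edges p = set (zip p (tl p))"

definition phi :: "'v list list \<Rightarrow> 'v list list \<Rightarrow> ('v \<times> 'v) \<Rightarrow> nat" where
  "phi Fs Bs e = max (length (filter (\<lambda>F. e \<in> path_edges F) Fs))
                     (length (filter (\<lambda>B. e \<in> path_edges B) Bs))"

definition scss_cost :: "('v \<times> 'v) set \<Rightarrow> (('v \<times> 'v) \<Rightarrow> real) \<Rightarrow> 'v list list \<Rightarrow> 'v list list \<Rightarrow> real" where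
  "scss_cost E w Fs Bs = (\<Sum>e\<in>E. w e * real (phi Fs Bs e))"

definition scss_feasible :: "('v \<times> 'v) set \<Rightarrow> 'v \<Rightarrow> 'v \<Rightarrow> nat \<Rightarrow> nat \<Rightarrow> 'v list list \<Rightarrow> 'v list list \<Rightarrow> bool" where
  "scss_feasible E s t k1 k2 Fs Bs \<longleftrightarrow>
     length Fs = k1 \<and> length Bs = k2 \<and>
     (\<forall>F\<in>set Fs. is_path E s t F) \<and> (\<forall>B\<in>set Bs. is_path E t s B)"

definition scss_optimal :: "('v \<times> 'v) set \<Rightarrow> (('v \<times> 'v) \<Rightarrow> real) \<Rightarrow> 'v \<Rightarrow> 'v \<Rightarrow> nat \<Rightarrow> nat \<Rightarrow> 'v list list \<Rightarrow> 'v list list \<Rightarrow> bool" where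
  "scss_optimal E w s t k1 k2 Fs Bs \<longleftrightarrow> scss_feasible E s t k1 k2 Fs Bs \<and>
     (\<forall>Fs' Bs'. scss_feasible E s t k1 k2 Fs' Bs' \<longrightarrow> scss_cost E w Fs Bs \<le> scss_cost E w Fs' Bs')"

definition shared_subpath :: "'v list \<Rightarrow> 'v list \<Rightarrow> 'v list \<Rightarrow> bool" where
  "shared_subpath F B P \<longleftrightarrow> 2 \<le> length P \<and> sublist P F \<and> sublist P B"

definition max_shared :: "'v list \<Rightarrow> 'v list \<Rightarrow> 'v list set" where
  "max_shared F B = {P. shared_subpath F B P \<and>
      (\<forall>Q. shared_subpath F B Q \<and> sublist P Q \<longrightarrow> Q = P)}"

definition pos_in :: "'v list \<Rightarrow> 'v list \<Rightarrow> nat" where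
  "pos_in X P = (LEAST i. take (length P) (drop i X) = P)"

definition enc_rank :: "'v list set \<Rightarrow> 'v list \<Rightarrow> 'v list \<Rightarrow> nat" where
  "enc_rank S X P = card {Q\<in>S. pos_in X Q < pos_in X P} + 1"

definition path_rev_compat :: "'v list \<Rightarrow> 'v list \<Rightarrow> bool" where
  "path_rev_compat F B \<longleftrightarrow>
     (let S = max_shared F B; d = card S in
      \<forall>P\<in>S. enc_rank S B P = d - enc_rank S F P + 1)"

definition general_rev_compat :: "'v list list \<Rightarrow> 'v list list \<Rightarrow> bool" where
  "general_rev_compat Fs Bs \<longleftrightarrow> (\<forall>F\<in>set Fs. \<forall>B\<in>set Bs. path_rev_compat F B)"

end

theory Submission
  imports Defs
begin

fun allp :: "nat \<Rightarrow> ('a\<times>'a) list \<Rightarrow> 'a \<Rightarrow> 'a \<Rightarrow> 'a list \<Rightarrow> 'a list list" where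
  "allp 0 El u v vis = (if u = v then [[u]] else [])"
| "allp (Suc n) El u v vis = (if u = v then [[u]] else
     concat (map (\<lambda>y. map ((#) u) (allp n El y v (u#vis)))
        (map snd (filter (\<lambda>e. fst e = u \<and> snd e \<notin> set (u#vis)) El))))"

lemma is_path_single: "is_path E u u p \<Longrightarrow> p = [u]"
  unfolding is_path_def
  by (metis distinct.simps(2) distinct_singleton hd_Cons_tl last_ConsL last_ConsR last_in_set list.collapse)

lemma is_path_step:
  assumes "is_path E u v p" "u \<noteq> v"
  shows "\<exists>q. p = u # q \<and> q \<noteq> [] \<and> (u, hd q) \<in> E \<and> u \<notin> set q \<and> is_path E (hd q) v q"
proof -
  from assms obtain q where p: "p = u # q" unfolding is_path_def by (cases p) auto
  have qne: "q \<noteq> []" using assms p unfolding is_path_def by auto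
  have e: "(u, hd q) \<in> E" using assms(1) p qne unfolding is_path_def
    by (metis Suc_less_eq hd_conv_nth length_Cons length_greater_0_conv nth_Cons_0 nth_Cons_Suc)
  have "is_path E (hd q) v q" using assms(1) p qne unfolding is_path_def
    by auto
  with p qne e assms(1) show ?thesis unfolding is_path_def by auto
qed

lemma allp_complete:
  "is_path (set El) u v p \<Longrightarrow> set p \<inter> set vis = {} \<Longrightarrow> length p \<le> Suc n \<Longrightarrow> p \<in> set (allp n El u v vis)"
proof (induction n arbitrary: u p vis)
  case 0
  then show ?case
    by (cases "u = v") (auto simp: is_path_single dest: is_path_step)
next
  case (Suc n)
  show ?case
  proof (cases "u = v")
    case True then show ?thesis using Suc by (auto simp: is_path_single)
  next
    case False
    from is_path_step[OF Suc.prems(1) False] obtain q where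
      q: "p = u # q" "q \<noteq> []" "(u, hd q) \<in> set El" "u \<notin> set q" "is_path (set El) (hd q) v q" by blast
    have "hd q \<in> set q" using q(2) by simp
    then have "hd q \<notin> set (u#vis)" using q Suc.prems(2) by (auto simp del: hd_in_set)
    moreover have "q \<in> set (allp n El (hd q) v (u#vis))"
      using Suc.IH[OF q(5)] q Suc.prems by auto
    ultimately show ?thesis using False q(1,3) by (force simp: image_iff)
  qed
qed

lemma is_path_set:
  assumes "is_path E u v p" "u \<in> X" "E \<subseteq> X \<times> X"
  shows "set p \<subseteq> X"
proof
  fix x assume "x \<in> set p"
  then obtain i where i: "i < length p" "x = p ! i" by (auto simp: in_set_conv_nth)
  show "x \<in> X"
  proof (cases i)
    case 0 then show ?thesis using assms i unfolding is_path_def by (metis hd_conv_nth)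
  next
    case (Suc j)
    then have "(p ! j, p ! i) \<in> E" using assms(1) i unfolding is_path_def by auto
    then show ?thesis using assms(3) i by auto
  qed
qed

definition El :: "(nat \<times> nat) list" where
  "El = [(0,2),(2,3),(3,6),(6,4),(4,5),(5,7),(7,1),(1,2),(3,7),(7,4),(5,6),(6,0)]"
definition wt :: "nat \<times> nat \<Rightarrow> real" where
  "wt e = (if e = (3,6) \<or> e = (3,7) then 10 else 1)"
abbreviation "F1 \<equiv> [0,2,3,6,4,5,7,1::nat]"
abbreviation "F2 \<equiv> [0,2,3,7,1::nat]"
abbreviation "B1 \<equiv> [1,2,3,7,4,5,6,0::nat]"
abbreviation "B2 \<equiv> [1,2,3,6,0::nat]"

lemma El_sub: "set El \<subseteq> {0..7} \<times> {0..7}" by (auto simp: El_def)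

lemma path_len:
  assumes "is_path (set El) u v p" "u \<in> {0..7}"
  shows "length p \<le> Suc 7"
proof -
  have "set p \<subseteq> {0..7}" using is_path_set[OF assms(1) assms(2) El_sub] .
  then have "card (set p) \<le> 8" using card_mono[of "{0..7::nat}"] by fastforce
  moreover have "distinct p" using assms(1) unfolding is_path_def by simp
  ultimately show ?thesis by (simp add: distinct_card)
qed

lemma fwd_paths: "is_path (set El) 0 1 p \<Longrightarrow> p = F1 \<or> p = F2"
proof -
  assume a: "is_path (set El) 0 1 p"
  have "p \<in> set (allp 7 El 0 1 [])" by (rule allp_complete[OF a]) (use path_len[OF a] in auto)
  then show ?thesis by (simp add: El_def numeral_eq_Suc; blast)
qed

lemma bwd_paths: "is_path (set El) 1 0 p \<Longrightarrow> p = B1 \<or> p = B2"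
proof -
  assume a: "is_path (set El) 1 0 p"
  have "p \<in> set (allp 7 El 1 0 [])" by (rule allp_complete[OF a]) (use path_len[OF a] in auto)
  then show ?thesis by (simp add: El_def numeral_eq_Suc; blast)
qed

lemma sh: "shared_subpath F1 B1 P \<longleftrightarrow> P = [2,3] \<or> P = [4,5]"
proof
  assume a: "shared_subpath F1 B1 P"
  have d: "P \<in> set (sublists F1)" using a unfolding shared_subpath_def in_set_sublists by blast
  have d2: "\<exists>Q\<in>set (sublists F1). P = Q" using d by blast
  show "P = [2,3] \<or> P = [4,5]" using d2 a
    by (simp only: sublists.simps prefixes.simps list.map append.simps set_simps bex_simps
        bex_empty, elim disjE) (simp_all add: shared_subpath_def sublist_code)
next
  assume "P = [2,3] \<or> P = [4,5]"
  then show "shared_subpath F1 B1 P" by (auto simp: shared_subpath_def sublist_code)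
qed

lemma ms: "max_shared F1 B1 = {[2,3],[4,5]}"
  unfolding max_shared_def sh by (auto simp: sublist_code)

lemma pos_inI: "take (length P) (drop k X) = P \<Longrightarrow> (\<forall>i<k. take (length P) (drop i X) \<noteq> P) \<Longrightarrow> pos_in X P = k"
  unfolding pos_in_def by (rule Least_equality) (auto simp: not_less[symmetric])

lemma notcompat: "\<not> path_rev_compat F1 B1"
proof -
  have p1: "pos_in F1 [2,3] = 1" by (rule pos_inI) (auto simp: less_Suc_eq)
  have p2: "pos_in F1 [4,5] = 4" by (rule pos_inI) (auto simp: less_Suc_eq numeral_eq_Suc)
  have p3: "pos_in B1 [2,3] = 1" by (rule pos_inI) (auto simp: less_Suc_eq)
  have p4: "pos_in B1 [4,5] = 4" by (rule pos_inI) (auto simp: less_Suc_eq numeral_eq_Suc)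
  have r1: "enc_rank {[2,3],[4,5]} F1 [2,3] = 1" 
  proof -
    have e: "{Q \<in> {[2,3],[4,5]}. pos_in F1 Q < pos_in F1 [2,3]} = {}" using p1 p2 by auto
    show ?thesis unfolding enc_rank_def e by simp
  qed
  have r2: "enc_rank {[2,3],[4,5]} B1 [2,3] = 1" 
  proof -
    have e: "{Q \<in> {[2,3],[4,5]}. pos_in B1 Q < pos_in B1 [2,3]} = {}" using p3 p4 by auto
    show ?thesis unfolding enc_rank_def e by simp
  qed
  show ?thesis unfolding path_rev_compat_def ms Let_def using r1 r2 by simp
qed

lemma cost_prop:
  assumes "Fs \<in> {[F1,F1],[F1,F2],[F2,F1],[F2,F2]}" "Bs \<in> {[B1,B1],[B1,B2],[B2,B1],[B2,B2]}"
  shows "35 \<le> scss_cost (set El) wt Fs Bs \<and> (scss_cost (set El) wt Fs Bs \<le> 35 \<longrightarrow> F1 \<in> set Fs \<and> B1 \<in> set Bs)"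
  using assms by (auto simp: scss_cost_def phi_def path_edges_def El_def wt_def)

lemma two_list: "length xs = 2 \<Longrightarrow> \<exists>a b. xs = [a,b]"
  by (cases xs; cases "tl xs"; auto simp: numeral_eq_Suc)

lemma feas_cases:
  assumes "scss_feasible (set El) 0 1 2 2 Fs Bs"
  shows "Fs \<in> {[F1,F1],[F1,F2],[F2,F1],[F2,F2]} \<and> Bs \<in> {[B1,B1],[B1,B2],[B2,B1],[B2,B2]}"
proof -
  obtain a b where ab: "Fs = [a,b]" using assms two_list unfolding scss_feasible_def by blast
  obtain c d where cd: "Bs = [c,d]" using assms two_list unfolding scss_feasible_def by blast
  have "a = F1 \<or> a = F2" "b = F1 \<or> b = F2" using assms ab fwd_paths unfolding scss_feasible_def by auto
  moreover have "c = B1 \<or> c = B2" "d = B1 \<or> d = B2" using assms cd bwd_paths unfolding scss_feasible_def by auto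
  ultimately show ?thesis using ab cd by auto
qed

lemma paths_ok: "is_path (set El) 0 1 F1" "is_path (set El) 0 1 F2" "is_path (set El) 1 0 B1" "is_path (set El) 1 0 B2"
  by (auto simp: is_path_def El_def less_Suc_eq numeral_eq_Suc)

lemma our_cost: "scss_cost (set El) wt [F1,F2] [B1,B2] = 35"
  by (simp add: scss_cost_def phi_def path_edges_def El_def wt_def)

theorem theorem4:
  shows "\<exists>(V :: nat set) (E :: (nat \<times> nat) set) (w :: (nat \<times> nat) \<Rightarrow> real) s t.
     finite V \<and> E \<subseteq> V \<times> V \<and> s \<in> V \<and> t \<in> V \<and> s \<noteq> t \<and> (\<forall>e\<in>E. 0 \<le> w e) \<and>
     (\<exists>Fs Bs. scss_optimal E w s t 2 2 Fs Bs) \<and>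
     (\<forall>Fs Bs. scss_optimal E w s t 2 2 Fs Bs \<longrightarrow> \<not> general_rev_compat Fs Bs)"
proof (rule exI[of _ "{0..7}"], rule exI[of _ "set El"], rule exI[of _ wt], rule exI[of _ 0],
    rule exI[of _ 1], intro conjI)
  show "finite {0..7::nat}" by simp
  show "set El \<subseteq> {0..7} \<times> {0..7}" by (rule El_sub)
  show "(0::nat) \<in> {0..7}" "(1::nat) \<in> {0..7}" "(0::nat) \<noteq> 1" by auto
  show "\<forall>e\<in>set El. 0 \<le> wt e" by (simp add: wt_def)
  have feas: "scss_feasible (set El) 0 1 2 2 [F1,F2] [B1,B2]"
    using paths_ok by (simp add: scss_feasible_def)
  show "\<exists>Fs Bs. scss_optimal (set El) wt 0 1 2 2 Fs Bs"
  proof (intro exI)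
    show "scss_optimal (set El) wt 0 1 2 2 [F1,F2] [B1,B2]"
      unfolding scss_optimal_def
    proof (intro conjI allI impI feas)
      fix Fs' Bs' assume "scss_feasible (set El) 0 1 2 2 Fs' Bs'"
      from cost_prop[OF conjunct1[OF feas_cases[OF this]] conjunct2[OF feas_cases[OF this]]]
      show "scss_cost (set El) wt [F1,F2] [B1,B2] \<le> scss_cost (set El) wt Fs' Bs'"
        using our_cost by simp
    qed
  qed
  show "\<forall>Fs Bs. scss_optimal (set El) wt 0 1 2 2 Fs Bs \<longrightarrow> \<not> general_rev_compat Fs Bs"
  proof (intro allI impI)
    fix Fs Bs assume o: "scss_optimal (set El) wt 0 1 2 2 Fs Bs"
    then have f: "scss_feasible (set El) 0 1 2 2 Fs Bs" and
      le: "scss_cost (set El) wt Fs Bs \<le> 35"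
      using feas our_cost unfolding scss_optimal_def by force+
    have "F1 \<in> set Fs \<and> B1 \<in> set Bs"
      using cost_prop[OF conjunct1[OF feas_cases[OF f]] conjunct2[OF feas_cases[OF f]]] le by blast
    then show "\<not> general_rev_compat Fs Bs"
      using notcompat unfolding general_rev_compat_def by blast
  qed
qed

end
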